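(* Let $V\subseteq R_d$ be a Gotzmann monomial vector space with $x_i$-decomposition $V=V_0\oplus x_iV_1$ and $x_i$-compression $L=L_0\oplus x_iL_1$. If $\mathbf n_1L_1\subseteq L_0$, then for every monomial $m\in V$ divisible by $x_i$ and every variable $x_j$ not dividing $m$, the monomial $\frac{x_j}{x_i}m$ lies in $V$.
   Context: Let $\Bbbk$ be a field, $R=\Bbbk[x_1,\dots,x_n]/(x_1^2,\dots,x_n^2)$, $R_d$ its degree-$d$ component. A monomial vector space is a subspace of some $R_d$ spanned by monomials; $\mathbf m_1V$ is the span of $\{x_jm\}$ over monomials $m\in V$ and all $j$. A subspace $V\subseteq R_d$ is Gotzmann if $|\mathbf m_1V|\le|\mathbf m_1W|$ for every subspace $W\subseteq R_d$ with $|W|=|V|$ ($|\cdot|$ = dimension). Fix $x_i$, let $Q=R/(x_i)$, with $\mathbf n_1W$ the span of $\{x_jm: j\neq i, m\in W\text{ monomial}\}$. A lex segment of $Q_e$ is a space spanned by an initial segment of the squarefree degree-$e$ monomials of $Q$ in lexicographic order (variables ordered $x_1>\dots>x_n$, omitting $x_i$). The $x_i$-decomposition of $V$ is $V=V_0\oplus x_iV_1$, with $V_0\subseteq Q_d$ spanned by the monomials of $V$ not divisible by $x_i$ and $V_1\subseteq Q_{d-1}$ spanned by the monomials $m$ with $x_im\in V$. The $x_i$-compression of $V$ is $L=L_0\oplus x_iL_1$, where $L_0\subseteq Q_d$, $L_1\subseteq Q_{d-1}$ are the lex segments with $|L_0|=|V_0|$, $|L_1|=|V_1|$. *)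

theory Defs
  imports Complex_Main "HOL-Library.Function_Algebras"
begin

(* Elements of R = k[x_1..x_n]/(x_1^2,...,x_n^2) are represented by their coefficient
   functions on squarefree monomials; a squarefree monomial is the finite set of
   indices of the variables dividing it. *)

definition scl :: "'k::field \<Rightarrow> (nat set \<Rightarrow> 'k) \<Rightarrow> (nat set \<Rightarrow> 'k)" where
  "scl c f = (\<lambda>S. c * f S)"

definition spn :: "(nat set \<Rightarrow> 'k::field) set \<Rightarrow> (nat set \<Rightarrow> 'k) set" where
  "spn W = module.span scl W"

definition subsp :: "(nat set \<Rightarrow> 'k::field) set \<Rightarrow> bool" where
  "subsp W = module.subspace scl W"

definition dimn :: "(nat set \<Rightarrow> 'k::field) set \<Rightarrow> nat" where
  "dimn W = vector_space.dim scl W"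

definition monom :: "nat set \<Rightarrow> (nat set \<Rightarrow> 'k::field)" where
  "monom S = (\<lambda>T. if T = S then 1 else 0)"

definition mulvar :: "nat \<Rightarrow> (nat set \<Rightarrow> 'k::field) \<Rightarrow> (nat set \<Rightarrow> 'k)" where
  "mulvar j f = (\<lambda>S. if j \<in> S then f (S - {j}) else 0)"

definition Rdeg :: "nat \<Rightarrow> nat \<Rightarrow> (nat set \<Rightarrow> 'k::field) set" where
  "Rdeg n d = {f. \<forall>S. f S \<noteq> 0 \<longrightarrow> S \<subseteq> {1..n} \<and> card S = d}"

definition m1 :: "nat \<Rightarrow> (nat set \<Rightarrow> 'k::field) set \<Rightarrow> (nat set \<Rightarrow> 'k) set" where
  "m1 n W = spn {mulvar j w | j w. j \<in> {1..n} \<and> w \<in> W}"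

definition gotzmann :: "nat \<Rightarrow> nat \<Rightarrow> (nat set \<Rightarrow> 'k::field) set \<Rightarrow> bool" where
  "gotzmann n d V \<longleftrightarrow> subsp V \<and> V \<subseteq> Rdeg n d \<and>
     (\<forall>W :: (nat set \<Rightarrow> 'k) set. subsp W \<and> W \<subseteq> Rdeg n d \<and> dimn W = dimn V \<longrightarrow> dimn (m1 n V) \<le> dimn (m1 n W))"

(* squarefree monomials of degree e in Q = R/(x_i) *)
definition Qmons :: "nat \<Rightarrow> nat \<Rightarrow> nat \<Rightarrow> nat set set" where
  "Qmons n i e = {S. S \<subseteq> {1..n} - {i} \<and> card S = e}"

(* lexicographic order with x_1 > ... > x_n: S >lex T *)
definition lex_gt :: "nat set \<Rightarrow> nat set \<Rightarrow> bool" where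
  "lex_gt S T \<longleftrightarrow> S \<noteq> T \<and> Min ((S - T) \<union> (T - S)) \<in> S"

definition lex_seg :: "nat \<Rightarrow> nat \<Rightarrow> nat \<Rightarrow> nat \<Rightarrow> nat set set" where
  "lex_seg n i e k = {S \<in> Qmons n i e. card {T \<in> Qmons n i e. lex_gt T S} < k}"

end

theory Submission
  imports Defs
begin


lemma vs_scl: "vector_space (scl :: 'k::field \<Rightarrow> (nat set \<Rightarrow> 'k) \<Rightarrow> _)"
  by unfold_locales (auto simp: scl_def fun_eq_iff algebra_simps)

interpretation VS: vector_space "scl :: 'k::field \<Rightarrow> (nat set \<Rightarrow> 'k) \<Rightarrow> _"
  by (rule vs_scl)

lemma sum_fun_apply: "(sum f A) x = (\<Sum>a\<in>A. f a x)"
  by (induction A rule: infinite_finite_induct) auto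

lemma monom_inj: "inj monom"
  unfolding inj_def monom_def fun_eq_iff by (metis one_neq_zero)

lemma indep_monom: "\<not> VS.dependent (monom ` A :: (nat set \<Rightarrow> 'k::field) set)"
proof -
  have "u v = 0" if H: "finite t" "t \<subseteq> monom ` A" "(\<Sum>v\<in>t. scl (u v) v) = (0 :: nat set \<Rightarrow> 'k)" "v \<in> t" for t u v
  proof -
    obtain S where S: "v = monom S" using H by blast
    have "(\<Sum>w\<in>t. scl (u w) w) S = u v"
    proof -
      have "(\<Sum>w\<in>t. scl (u w) w) S = (\<Sum>w\<in>t. u w * w S)" by (simp add: sum_fun_apply scl_def)
      also have "\<dots> = (\<Sum>w\<in>{v}. u w * w S)"
      proof (rule sum.mono_neutral_right)
        show "\<forall>w\<in>t - {v}. u w * w S = 0"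
        proof
          fix w assume "w \<in> t - {v}"
          then obtain T where "w = monom T" "T \<noteq> S" using H S by blast
          then show "u w * w S = 0" by (simp add: monom_def)
        qed
      qed (use H in auto)
      also have "\<dots> = u v" using S by (simp add: monom_def)
      finally show ?thesis .
    qed
    then show ?thesis using H by simp
  qed
  then show ?thesis unfolding VS.independent_explicit_module by blast
qed

lemma dimn_monom: "finite A \<Longrightarrow> dimn (spn (monom ` A) :: (nat set \<Rightarrow> 'k::field) set) = card A"
  unfolding dimn_def spn_def
  using VS.dim_span_eq_card_independent[OF indep_monom] card_image[OF inj_on_subset[OF monom_inj]]
  by (metis subset_UNIV)

lemma monom_in_spn: "(monom S :: nat set \<Rightarrow> 'k::field) \<in> spn (monom ` A) \<longleftrightarrow> S \<in> A"
proof
  assume h: "(monom S :: nat set \<Rightarrow> 'k::field) \<in> spn (monom ` A)"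
  have sub: "spn (monom ` A) \<subseteq> {f :: nat set \<Rightarrow> 'k. \<forall>T. T \<notin> A \<longrightarrow> f T = 0}"
    unfolding spn_def
    by (rule VS.span_minimal) (auto simp: monom_def VS.subspace_def scl_def)
  have "monom S \<in> {f :: nat set \<Rightarrow> 'k. \<forall>T. T \<notin> A \<longrightarrow> f T = 0}" using sub h by (rule subsetD)
  hence "S \<notin> A \<Longrightarrow> (monom S :: nat set \<Rightarrow> 'k) S = 0" by simp
  then show "S \<in> A" by (cases "S \<in> A") (auto simp: monom_def)
qed (auto simp: spn_def intro: VS.span_base)

definition upX :: "nat set \<Rightarrow> nat set set \<Rightarrow> nat set set" where
  "upX X F = {insert j A | j A. A \<in> F \<and> j \<in> X \<and> j \<notin> A}"

lemma mulvar_monom: "mulvar j (monom S) = (if j \<in> S then 0 else monom (insert j S))"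
  by (auto simp: mulvar_def monom_def fun_eq_iff)

lemma mulvar_span:
  assumes "w \<in> spn B"
  shows "mulvar j w \<in> spn (mulvar j ` (B :: (nat set \<Rightarrow> 'k::field) set))"
proof -
  have "subspace_ok": "VS.subspace {w :: nat set \<Rightarrow> 'k. mulvar j w \<in> spn (mulvar j ` B)}"
    unfolding VS.subspace_def
  proof (intro conjI allI impI ballI)
    have "mulvar j (0::nat set \<Rightarrow> 'k) = 0" by (auto simp: mulvar_def)
    then show "0 \<in> {w :: nat set \<Rightarrow> 'k. mulvar j w \<in> spn (mulvar j ` B)}"
      by (simp add: spn_def VS.span_zero)
  next
    fix x y :: "nat set \<Rightarrow> 'k"
    assume "x \<in> {w. mulvar j w \<in> spn (mulvar j ` B)}" "y \<in> {w. mulvar j w \<in> spn (mulvar j ` B)}"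
    moreover have "mulvar j (x + y) = mulvar j x + mulvar j y" by (auto simp: mulvar_def)
    ultimately show "x + y \<in> {w. mulvar j w \<in> spn (mulvar j ` B)}"
      by (simp add: spn_def VS.span_add)
  next
    fix c :: 'k and x :: "nat set \<Rightarrow> 'k"
    assume "x \<in> {w. mulvar j w \<in> spn (mulvar j ` B)}"
    moreover have "mulvar j (scl c x) = scl c (mulvar j x)" by (auto simp: mulvar_def scl_def)
    ultimately show "scl c x \<in> {w. mulvar j w \<in> spn (mulvar j ` B)}"
      by (simp add: spn_def VS.span_scale)
  qed
  show ?thesis
    using VS.span_induct[of w B "\<lambda>w. mulvar j w \<in> spn (mulvar j ` B)"] assms subspace_ok
    by (auto simp: spn_def intro: VS.span_base)
qed

lemma m1_monom: "m1 n (spn (monom ` A) :: (nat set \<Rightarrow> 'k::field) set) = spn (monom ` upX {1..n} A)"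
proof
  show "m1 n (spn (monom ` A) :: (nat set \<Rightarrow> 'k::field) set) \<subseteq> spn (monom ` upX {1..n} A)"
    unfolding m1_def spn_def
  proof (rule VS.span_minimal[OF _ VS.subspace_span], safe)
    fix j and w :: "nat set \<Rightarrow> 'k"
    assume j: "j \<in> {1..n}" and w: "w \<in> module.span scl (monom ` A)"
    have "mulvar j w \<in> spn (mulvar j ` monom ` A)" using w mulvar_span[of w "monom ` A" j] by (simp add: spn_def)
    moreover have "mulvar j ` monom ` A \<subseteq> spn (monom ` upX {1..n} A)"
    proof
      fix x assume "x \<in> mulvar j ` monom ` (A :: nat set set)"
      then obtain S where S: "S \<in> A" "x = mulvar j (monom S)" by blast
      show "x \<in> spn (monom ` upX {1..n} A)"
      proof (cases "j \<in> S")
        case True then show ?thesis using S by (simp add: mulvar_monom spn_def VS.span_zero)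
      next
        case False
        then have "insert j S \<in> upX {1..n} A" using S j unfolding upX_def by blast
        then show ?thesis using S False by (simp add: mulvar_monom spn_def VS.span_base)
      qed
    qed
    ultimately show "mulvar j w \<in> module.span scl (monom ` upX {1..n} A)"
      unfolding spn_def by (metis VS.span_mono VS.span_span subsetD)
  qed
next
  show "spn (monom ` upX {1..n} A) \<subseteq> m1 n (spn (monom ` A) :: (nat set \<Rightarrow> 'k::field) set)"
    unfolding m1_def spn_def
  proof (rule VS.span_mono)
    show "monom ` upX {1..n} A \<subseteq> {mulvar j w |j w. j \<in> {1..n} \<and> w \<in> module.span scl (monom ` A)}"
    proof
      fix x assume "x \<in> monom ` upX {1..n} A"
      then obtain j S where "S \<in> A" "j \<in> {1..n}" "j \<notin> S" "x = monom (insert j S)" unfolding upX_def by blast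
      then show "x \<in> {mulvar j w |j w. j \<in> {1..n} \<and> w \<in> module.span scl (monom ` A)}"
        by (auto simp: mulvar_monom intro!: exI[of _ j] exI[of _ "monom S"] VS.span_base)
    qed
  qed
qed

lemma plus_ne0: "(x + y) S \<noteq> (0::'k::field) \<Longrightarrow> x S \<noteq> 0 \<or> y S \<noteq> 0"
  by auto

lemma Rdeg_subspace: "VS.subspace (Rdeg n d :: (nat set \<Rightarrow> 'k::field) set)"
  unfolding VS.subspace_def Rdeg_def
  apply (auto simp: scl_def)
  apply (case_tac "x S = 0"; force)+
  done

lemma spn_Rdeg:
  assumes "A \<subseteq> {S. S \<subseteq> {1..n} \<and> card S = d}"
  shows "spn (monom ` A) \<subseteq> (Rdeg n d :: (nat set \<Rightarrow> 'k::field) set)"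
  unfolding spn_def
proof (rule VS.span_minimal[OF _ Rdeg_subspace])
  show "monom ` A \<subseteq> Rdeg n d"
  proof
    fix x assume "x \<in> monom ` A"
    then obtain S where "S \<in> A" "x = monom S" by blast
    then show "x \<in> Rdeg n d" using assms unfolding Rdeg_def monom_def by auto
  qed
qed

lemma gotz_card:
  assumes gotz: "gotzmann n d (spn (monom ` M) :: (nat set \<Rightarrow> 'k::field) set)"
    and M: "M \<subseteq> {S. S \<subseteq> {1..n} \<and> card S = d}"
    and N: "N \<subseteq> {S. S \<subseteq> {1..n} \<and> card S = d}"
    and c: "card N = card M"
  shows "card (upX {1..n} M) \<le> card (upX {1..n} N)"
proof -
  have fin: "finite {S. S \<subseteq> {1..n} \<and> card S = d}" by (rule finite_subset[of _ "Pow {1..n}"]) auto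
  have finM: "finite M" "finite N" using fin M N by (auto intro: finite_subset)
  have finU: "finite (upX {1..n} X)" if "X \<subseteq> {S. S \<subseteq> {1..n} \<and> card S = d}" for X
    by (rule finite_subset[of _ "Pow {1..n}"]) (use that in \<open>auto simp: upX_def\<close>)
  let ?W = "spn (monom ` N) :: (nat set \<Rightarrow> 'k) set"
  have "dimn (m1 n (spn (monom ` M) :: (nat set \<Rightarrow> 'k) set)) \<le> dimn (m1 n ?W)"
    using gotz unfolding gotzmann_def
    using spn_Rdeg[OF N] dimn_monom finM c
    by (metis spn_def subsp_def VS.subspace_span)
  then show ?thesis
    unfolding m1_monom using dimn_monom[OF finU[OF M]] dimn_monom[OF finU[OF N]] by metis
qed



definition Qm :: "nat set \<Rightarrow> nat \<Rightarrow> nat set set" where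
  "Qm X e = {S. S \<subseteq> X \<and> card S = e}"

definition sh :: "nat set \<Rightarrow> nat set \<Rightarrow> nat set \<Rightarrow> nat set" where
  "sh U V A = (if V \<subseteq> A \<and> U \<inter> A = {} then (A - V) \<union> U else A)"

definition cmp :: "nat set \<Rightarrow> nat set \<Rightarrow> nat set set \<Rightarrow> nat set set" where
  "cmp U V F = {A \<in> F. sh U V A \<in> F} \<union> (sh U V ` {A \<in> F. sh U V A \<notin> F})"

definition compressed :: "nat set \<Rightarrow> nat set \<Rightarrow> nat set set \<Rightarrow> bool" where
  "compressed U V F \<longleftrightarrow> (\<forall>A\<in>F. sh U V A \<in> F)"

definition valid :: "nat set \<Rightarrow> nat set \<Rightarrow> nat set \<Rightarrow> bool" where
  "valid X U V \<longleftrightarrow> U \<subseteq> X \<and> V \<subseteq> X \<and> U \<inter> V = {} \<and> card U = card V \<and> U \<noteq> {} \<and> Min (U \<union> V) \<in> U"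

definition val :: "nat \<Rightarrow> nat set \<Rightarrow> nat" where
  "val n S = (\<Sum>x\<in>S. (2::nat) ^ (n - x))"

lemma sh_neq: "sh U V A \<noteq> A \<Longrightarrow> V \<subseteq> A \<and> U \<inter> A = {} \<and> sh U V A = (A - V) \<union> U"
  by (auto simp: sh_def split: if_splits)

lemma sh_inj: "sh U V A = sh U V B \<Longrightarrow> sh U V A \<noteq> A \<Longrightarrow> sh U V B \<noteq> B \<Longrightarrow> A = B"
proof -
  assume h: "sh U V A = sh U V B" "sh U V A \<noteq> A" "sh U V B \<noteq> B"
  from sh_neq[OF h(2)] have a: "V \<subseteq> A" "U \<inter> A = {}" "sh U V A = (A - V) \<union> U" by auto
  from sh_neq[OF h(3)] have b: "V \<subseteq> B" "U \<inter> B = {}" "sh U V B = (B - V) \<union> U" by auto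
  have "A = (sh U V A - U) \<union> V" using a by auto
  also have "\<dots> = (sh U V B - U) \<union> V" using h(1) by simp
  also have "\<dots> = B" using b by auto
  finally show ?thesis .
qed

lemma cmp_card:
  assumes "finite F"
  shows "card (cmp U V F) = card F"
proof -
  let ?P1 = "{A \<in> F. sh U V A \<in> F}" and ?P2 = "{A \<in> F. sh U V A \<notin> F}"
  have inj: "inj_on (sh U V) ?P2"
    by (rule inj_onI, rule sh_inj) auto
  have disj: "?P1 \<inter> sh U V ` ?P2 = {}" by auto
  have "card (cmp U V F) = card ?P1 + card (sh U V ` ?P2)"
    unfolding cmp_def by (rule card_Un_disjoint) (use assms disj in auto)
  also have "\<dots> = card ?P1 + card ?P2" using card_image[OF inj] by simp
  also have "\<dots> = card (?P1 \<union> ?P2)" by (rule card_Un_disjoint[symmetric]) (use assms in auto)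
  also have "?P1 \<union> ?P2 = F" by auto
  finally show ?thesis .
qed

lemma cmp_Qm:
  assumes "F \<subseteq> Qm X e" "finite X" "U \<subseteq> X" "card U = card V" "finite V"
  shows "cmp U V F \<subseteq> Qm X e"
proof
  fix B assume "B \<in> cmp U V F"
  then consider "B \<in> F" | A where "A \<in> F" "sh U V A \<notin> F" "B = sh U V A" by (auto simp: cmp_def)
  then show "B \<in> Qm X e"
  proof cases
    case 1 then show ?thesis using assms by auto
  next
    case 2
    have ne: "sh U V A \<noteq> A" using 2 by auto
    from sh_neq[OF ne] have app: "V \<subseteq> A" "U \<inter> A = {}" "B = (A - V) \<union> U" using 2 by auto
    have AQ: "A \<subseteq> X" "card A = e" using 2 assms by (auto simp: Qm_def)
    have finA: "finite A" using AQ assms finite_subset by auto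
    have finU: "finite U" using assms finite_subset by auto
    have "card B = card (A - V) + card U"
      unfolding app(3) by (rule card_Un_disjoint) (use app finA finU in auto)
    also have "card (A - V) = card A - card V" using app finA by (simp add: card_Diff_subset assms)
    finally have "card B = e" using AQ app assms finA card_mono[OF finA app(1)] by simp
    moreover have "B \<subseteq> X" using app AQ assms by auto
    ultimately show ?thesis by (simp add: Qm_def)
  qed
qed

lemma up_cmp:
  assumes U0: "U \<noteq> {}" and UX: "U \<subseteq> X"
    and cond: "\<forall>v\<in>V. \<exists>u\<in>U. compressed (U - {u}) (V - {v}) F"
  shows "upX X (cmp U V F) \<subseteq> cmp U V (upX X F)"
proof
  fix D assume "D \<in> upX X (cmp U V F)"
  then obtain j A' where A': "A' \<in> cmp U V F" "j \<in> X" "j \<notin> A'" "D = insert j A'"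
    by (auto simp: upX_def)
  let ?G = "upX X F"
  have inG: "\<And>j A. A \<in> F \<Longrightarrow> j \<in> X \<Longrightarrow> j \<notin> A \<Longrightarrow> insert j A \<in> ?G" by (auto simp: upX_def)
  have mem1: "D \<in> ?G \<Longrightarrow> sh U V D \<in> ?G \<Longrightarrow> D \<in> cmp U V ?G" by (simp add: cmp_def)
  have mem2: "\<And>B. B \<in> ?G \<Longrightarrow> sh U V B \<notin> ?G \<Longrightarrow> sh U V B \<in> cmp U V ?G" by (auto simp: cmp_def)
  from A'(1) consider (a) "A' \<in> F" "sh U V A' \<in> F"
    | (b) A where "A \<in> F" "sh U V A \<notin> F" "A' = sh U V A" by (auto simp: cmp_def)
  then show "D \<in> cmp U V ?G"
  proof cases
    case a
    have DG: "D \<in> ?G" using inG a A' by auto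
    show ?thesis
    proof (cases "V \<subseteq> D \<and> U \<inter> D = {}")
      case False then have "sh U V D = D" unfolding sh_def by auto
      then show ?thesis using mem1 DG by simp
    next
      case True
      hence shD: "sh U V D = (D - V) \<union> U" by (simp add: sh_def)
      show ?thesis
      proof (cases "j \<in> V")
        case False
        with True A' have app: "V \<subseteq> A'" "U \<inter> A' = {}" by auto
        hence "sh U V A' = (A' - V) \<union> U" by (simp add: sh_def)
        moreover have "sh U V D = insert j ((A' - V) \<union> U)" using shD A'(4) False by auto
        moreover have "j \<notin> (A' - V) \<union> U" using A' True by auto
        ultimately have "sh U V D \<in> ?G" using inG[of "sh U V A'" j] a A'(2) by auto
        then show ?thesis using mem1 DG by simp
      next
        case jV: True
        from cond jV obtain u where u: "u \<in> U" "compressed (U - {u}) (V - {j}) F" by blast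
        have app: "V - {j} \<subseteq> A'" "(U - {u}) \<inter> A' = {}" using True A'(4) by auto
        have "sh (U - {u}) (V - {j}) A' \<in> F" using u(2) a(1) by (simp add: compressed_def)
        moreover have "sh (U - {u}) (V - {j}) A' = (A' - (V - {j})) \<union> (U - {u})"
          using app by (simp add: sh_def)
        ultimately have A''F: "(A' - (V - {j})) \<union> (U - {u}) \<in> F" by simp
        have "u \<notin> (A' - (V - {j})) \<union> (U - {u})" using True A'(4) u(1) by auto
        moreover have "sh U V D = insert u ((A' - (V - {j})) \<union> (U - {u}))"
          using shD A'(3,4) jV u(1) by auto
        ultimately have "sh U V D \<in> ?G" using inG A''F u(1) UX by auto
        then show ?thesis using mem1 DG by simp
      qed
    qed
  next
    case b
    have ne: "sh U V A \<noteq> A" using b by auto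
    from sh_neq[OF ne] have app: "V \<subseteq> A" "U \<inter> A = {}" and A'eq: "A' = (A - V) \<union> U"
      using b by auto
    have shD: "sh U V D = D" using U0 A'eq A'(4) by (auto simp: sh_def)
    show ?thesis
    proof (cases "j \<in> V")
      case False
      have jA: "j \<notin> A" using A'(3) A'eq False by auto
      have BG: "insert j A \<in> ?G" using inG b(1) A'(2) jA by auto
      have shB: "sh U V (insert j A) = D" using app A'eq A'(3,4) False by (auto simp: sh_def)
      show ?thesis
      proof (cases "D \<in> ?G")
        case True then show ?thesis using mem1 shD by simp
      next
        case False then show ?thesis using mem2[OF BG] shB by simp
      qed
    next
      case jV: True
      from cond jV obtain u where u: "u \<in> U" "compressed (U - {u}) (V - {j}) F" by blast
      have "sh (U - {u}) (V - {j}) A \<in> F" using u(2) b(1) by (simp add: compressed_def)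
      moreover have "sh (U - {u}) (V - {j}) A = (A - (V - {j})) \<union> (U - {u})" using app by (auto simp: sh_def)
      ultimately have F'': "(A - (V - {j})) \<union> (U - {u}) \<in> F" by simp
      have "D = insert u ((A - (V - {j})) \<union> (U - {u}))" using A'eq A'(4) jV app u(1) by auto
      moreover have "u \<notin> (A - (V - {j})) \<union> (U - {u})" using app u(1) by auto
      ultimately have "D \<in> ?G" using inG F'' u(1) UX by auto
      then show ?thesis using mem1 shD by simp
    qed
  qed
qed

lemma finite_upX: "finite X \<Longrightarrow> F \<subseteq> Pow X \<Longrightarrow> finite (upX X F)"
  by (rule finite_subset[of _ "Pow X"]) (auto simp: upX_def)

lemma card_up_cmp:
  assumes "finite X" "F \<subseteq> Pow X" "U \<noteq> {}" "U \<subseteq> X"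
    and cond: "\<forall>v\<in>V. \<exists>u\<in>U. compressed (U - {u}) (V - {v}) F"
  shows "card (upX X (cmp U V F)) \<le> card (upX X F)"
proof -
  have fin: "finite (upX X F)" using finite_upX assms by blast
  have "card (upX X (cmp U V F)) \<le> card (cmp U V (upX X F))"
    by (rule card_mono) (use up_cmp[OF assms(3,4) cond] fin cmp_card in \<open>auto simp: cmp_def\<close>)
  also have "\<dots> = card (upX X F)" using cmp_card fin by blast
  finally show ?thesis .
qed

lemma geom_lt: "m \<le> n \<Longrightarrow> (\<Sum>x\<in>{m<..n}. (2::nat) ^ (n - x)) < 2 ^ (n - m)"
proof (induction "n - m" arbitrary: m)
  case 0 then show ?case by simp
next
  case (Suc k)
  then have mn: "m < n" by simp
  have eq: "{m<..n} = insert (Suc m) {Suc m<..n}" using mn by auto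
  have "(\<Sum>x\<in>{m<..n}. (2::nat) ^ (n - x)) = 2 ^ (n - Suc m) + (\<Sum>x\<in>{Suc m<..n}. (2::nat) ^ (n - x))"
    unfolding eq by simp
  also have "\<dots> < 2 ^ (n - Suc m) + 2 ^ (n - Suc m)"
    using Suc.hyps(1)[of "Suc m"] Suc.hyps(2) mn by simp
  also have "\<dots> = 2 ^ (n - m)" using mn
    by (metis Suc_diff_Suc mult_2 power_Suc)
  finally show ?case .
qed

lemma lex_val:
  assumes S: "S \<subseteq> {..n}" and T: "T \<subseteq> {..n}" and gt: "lex_gt S T"
  shows "val n T < val n S"
proof -
  have finS: "finite S" and finT: "finite T" using S T finite_subset by auto
  define D where "D = (S - T) \<union> (T - S)"
  define m where "m = Min D"
  have Dne: "D \<noteq> {}" using gt unfolding lex_gt_def D_def by auto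
  have finD: "finite D" using finS finT D_def by auto
  have mS: "m \<in> S" using gt unfolding lex_gt_def m_def D_def by auto
  have mD: "m \<in> D" using Min_in[OF finD Dne] m_def by simp
  have mT: "m \<notin> T" using mS mD D_def by auto
  have below: "\<And>x. x < m \<Longrightarrow> (x \<in> S \<longleftrightarrow> x \<in> T)"
  proof -
    fix x assume "x < m"
    show "x \<in> S \<longleftrightarrow> x \<in> T"
    proof (rule ccontr)
      assume "\<not> (x \<in> S \<longleftrightarrow> x \<in> T)"
      then have "x \<in> D" by (auto simp: D_def)
      then have "m \<le> x" using Min_le[OF finD] m_def by simp
      then show False using \<open>x < m\<close> by simp
    qed
  qed
  define P where "P = {x \<in> T. x < m}"
  have mn: "m \<le> n" using mS S by auto
  have TP: "T \<subseteq> P \<union> {m<..n}"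
  proof
    fix x assume "x \<in> T"
    then show "x \<in> P \<union> {m<..n}" using mT T by (cases "x < m") (auto simp: P_def, metis antisym_conv2 not_le)
  qed
  have "val n T \<le> (\<Sum>x\<in>P \<union> {m<..n}. (2::nat) ^ (n - x))"
    unfolding val_def by (rule sum_mono2) (use TP finT P_def in auto)
  also have "\<dots> = val n P + (\<Sum>x\<in>{m<..n}. (2::nat) ^ (n - x))"
    unfolding val_def by (rule sum.union_disjoint) (use finT P_def in auto)
  also have "\<dots> < val n P + 2 ^ (n - m)" using geom_lt[OF mn] by simp
  also have "\<dots> = val n (insert m P)" unfolding val_def using finT P_def by simp
  also have "\<dots> \<le> val n S"
    unfolding val_def by (rule sum_mono2) (use finS mS below P_def in auto)
  finally show ?thesis .
qed

lemma sh_val: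
  assumes "valid X U V" "X \<subseteq> {..n}" "A \<subseteq> X" "sh U V A \<noteq> A"
  shows "val n A < val n (sh U V A)"
proof -
  from sh_neq[OF assms(4)] have app: "V \<subseteq> A" "U \<inter> A = {}" "sh U V A = (A - V) \<union> U" by auto
  have UV: "U \<subseteq> X" "V \<subseteq> X" "U \<inter> V = {}" "Min (U \<union> V) \<in> U" using assms(1) by (auto simp: valid_def)
  have "(sh U V A - A) \<union> (A - sh U V A) = U \<union> V" using app UV by auto
  then have "lex_gt (sh U V A) A" unfolding lex_gt_def using assms(4) UV app by auto
  moreover have "sh U V A \<subseteq> {..n}" "A \<subseteq> {..n}" using app UV assms by auto
  ultimately show ?thesis using lex_val by blast
qed

lemma cmp_val:
  assumes "finite F" "F \<subseteq> Pow X" "valid X U V" "X \<subseteq> {..n}" "\<not> compressed U V F"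
  shows "sum (val n) F < sum (val n) (cmp U V F)"
proof -
  let ?P1 = "{A \<in> F. sh U V A \<in> F}" and ?P2 = "{A \<in> F. sh U V A \<notin> F}"
  have inj: "inj_on (sh U V) ?P2"
    by (rule inj_onI, rule sh_inj) auto
  have disj: "?P1 \<inter> sh U V ` ?P2 = {}" by auto
  have ne: "?P2 \<noteq> {}" using assms(5) by (auto simp: compressed_def)
  have "sum (val n) F = sum (val n) ?P1 + sum (val n) ?P2"
  proof -
    have "F = ?P1 \<union> ?P2" by auto
    then have "sum (val n) F = sum (val n) (?P1 \<union> ?P2)" by simp
    also have "\<dots> = sum (val n) ?P1 + sum (val n) ?P2"
      by (rule sum.union_disjoint) (use assms(1) in auto)
    finally show ?thesis .
  qed
  also have "\<dots> < sum (val n) ?P1 + sum (\<lambda>A. val n (sh U V A)) ?P2"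
  proof -
    have "sum (val n) ?P2 < sum (\<lambda>A. val n (sh U V A)) ?P2"
    proof (rule sum_strict_mono)
      show "finite ?P2" using assms(1) by auto
      show "?P2 \<noteq> {}" by (rule ne)
      fix A assume "A \<in> ?P2"
      then show "val n A < val n (sh U V A)" using sh_val[OF assms(3,4)] assms(2) by force
    qed
    then show ?thesis by simp
  qed
  also have "sum (\<lambda>A. val n (sh U V A)) ?P2 = sum (val n) (sh U V ` ?P2)"
    using sum.reindex[OF inj, of "val n"] by simp
  also have "sum (val n) ?P1 + sum (val n) (sh U V ` ?P2) = sum (val n) (cmp U V F)"
    unfolding cmp_def by (rule sum.union_disjoint[symmetric]) (use assms(1) disj in auto)
  finally show ?thesis .
qed

lemma finite_Qm: "finite X \<Longrightarrow> finite (Qm X e)"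
  by (rule finite_subset[of _ "Pow X"]) (auto simp: Qm_def)

lemma minimal_cond:
  assumes X: "finite X" and UV: "valid X U V"
    and minU: "\<And>U' V'. valid X U' V' \<Longrightarrow> \<not> compressed U' V' F \<Longrightarrow> card U \<le> card U'"
  shows "\<forall>v\<in>V. \<exists>u\<in>U. compressed (U - {u}) (V - {v}) F"
proof
  fix v assume v: "v \<in> V"
  have UX: "U \<subseteq> X" "V \<subseteq> X" "U \<inter> V = {}" "card U = card V" "U \<noteq> {}" "Min (U \<union> V) \<in> U"
    using UV by (auto simp: valid_def)
  have finU1: "finite U" using UX(1) X by (rule finite_subset)
  have finV1: "finite V" using UX(2) X by (rule finite_subset)
  note finU = finU1 finV1
  show "\<exists>u\<in>U. compressed (U - {u}) (V - {v}) F"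
  proof (cases "card U = 1")
    case True
    then obtain u where u: "U = {u}" by (auto simp: card_Suc_eq)
    have "card V = 1" using True UX by simp
    then have "V = {v}" using v by (auto simp: card_Suc_eq)
    then show ?thesis using u by (auto simp: compressed_def sh_def)
  next
    case False
    have "card U \<noteq> 0" using UX(5) finU1 by simp
    then have c2: "card U \<ge> 2" using False by linarith
    define m where "m = Min (U \<union> V)"
    have mU: "m \<in> U" using UX m_def by simp
    have mle: "\<And>y. y \<in> U \<union> V \<Longrightarrow> m \<le> y" using finU m_def by simp
    have mMax: "m \<noteq> Max U"
    proof
      assume mM: "m = Max U"
      have "U \<subseteq> {m}"
      proof
        fix x assume "x \<in> U"
        then have "m \<le> x" "x \<le> Max U" using mle finU by auto
        then show "x \<in> {m}" using mM by simp
      qed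
      then have "card U \<le> 1" using card_mono[of "{m}" U] by simp
      then show False using c2 by simp
    qed
    have MU: "Max U \<in> U" using finU UX by simp
    have valid': "valid X (U - {Max U}) (V - {v})"
    proof -
      have m': "m \<in> (U - {Max U}) \<union> (V - {v})" using mU mMax by auto
      have "Min ((U - {Max U}) \<union> (V - {v})) = m"
        by (rule Min_eqI) (use finU m' mle in auto)
      moreover have "card (U - {Max U}) = card (V - {v})" using finU MU v UX by simp
      moreover have "U - {Max U} \<noteq> {}" using mU mMax by auto
      ultimately show ?thesis using UX mU mMax unfolding valid_def by auto
    qed
    have "card (U - {Max U}) < card U" using card_Diff1_less[OF finU1 MU] .
    then have "compressed (U - {Max U}) (V - {v}) F" using minU[OF valid'] by fastforce
    then show ?thesis using MU by blast
  qed
qed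

lemma kk_exists:
  assumes X: "finite X" "X \<subseteq> {..n}"
  shows "F \<subseteq> Qm X e \<Longrightarrow> \<exists>F'. F' \<subseteq> Qm X e \<and> card F' = card F \<and>
           card (upX X F') \<le> card (upX X F) \<and> (\<forall>U V. valid X U V \<longrightarrow> compressed U V F')"
proof (induction "sum (val n) (Qm X e) - sum (val n) F" arbitrary: F rule: less_induct)
  case less
  have finQ: "finite (Qm X e)" using finite_Qm X by blast
  have finF: "finite F" using less.prems finQ finite_subset by blast
  have FP: "F \<subseteq> Pow X" using less.prems by (auto simp: Qm_def)
  show ?case
  proof (cases "\<forall>U V. valid X U V \<longrightarrow> compressed U V F")
    case True then show ?thesis using less.prems by blast
  next
    case False
    define P where "P = (\<lambda>k. \<exists>U V. valid X U V \<and> \<not> compressed U V F \<and> card U = k)"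
    have "\<exists>k. P k" using False P_def by blast
    then have PL: "P (LEAST k. P k)" by (rule LeastI_ex)
    then obtain U V where UV: "valid X U V" "\<not> compressed U V F" "card U = (LEAST k. P k)"
      unfolding P_def by blast
    have minU: "\<And>U' V'. valid X U' V' \<Longrightarrow> \<not> compressed U' V' F \<Longrightarrow> card U \<le> card U'"
      using UV(3) P_def by (metis Least_le)
    have cond: "\<forall>v\<in>V. \<exists>u\<in>U. compressed (U - {u}) (V - {v}) F"
      by (rule minimal_cond[OF X(1) UV(1) minU])
    have UX: "U \<subseteq> X" "V \<subseteq> X" "card U = card V" "U \<noteq> {}" using UV by (auto simp: valid_def)
    have finV: "finite V" using finite_subset[OF UX(2) X(1)] .
    define F1 where "F1 = cmp U V F"
    have F1Q: "F1 \<subseteq> Qm X e" unfolding F1_def by (rule cmp_Qm) (use less.prems X UX finV in auto)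
    have cF1: "card F1 = card F" unfolding F1_def using cmp_card finF by blast
    have uF1: "card (upX X F1) \<le> card (upX X F)"
      unfolding F1_def by (rule card_up_cmp) (use X FP UX cond in auto)
    have "sum (val n) F < sum (val n) F1" unfolding F1_def by (rule cmp_val) (use finF FP UV X in auto)
    moreover have "sum (val n) F1 \<le> sum (val n) (Qm X e)" by (rule sum_mono2[OF finQ F1Q]) simp
    ultimately have "sum (val n) (Qm X e) - sum (val n) F1 < sum (val n) (Qm X e) - sum (val n) F"
      by linarith
    from less.hyps[OF this F1Q] obtain F' where "F' \<subseteq> Qm X e" "card F' = card F1"
      "card (upX X F') \<le> card (upX X F1)" "\<forall>U V. valid X U V \<longrightarrow> compressed U V F'" by blast
    then show ?thesis using cF1 uF1 by (intro exI[of _ F']) auto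
  qed
qed

lemma lex_total: "finite S \<Longrightarrow> finite T \<Longrightarrow> S \<noteq> T \<Longrightarrow> lex_gt S T \<or> lex_gt T S"
proof -
  assume fin: "finite S" "finite T" and ne: "S \<noteq> T"
  let ?D = "(S - T) \<union> (T - S)"
  have "?D \<noteq> {}" using ne by auto
  then have "Min ?D \<in> ?D" using fin by (intro Min_in) auto
  moreover have "(T - S) \<union> (S - T) = ?D" by auto
  ultimately show ?thesis unfolding lex_gt_def using ne by auto
qed

lemma compressed_initial:
  assumes all: "\<forall>U V. valid X U V \<longrightarrow> compressed U V F" and FQ: "F \<subseteq> Qm X e" and X: "finite X"
    and A: "A \<in> F" and B: "B \<in> Qm X e" and gt: "lex_gt B A"
  shows "B \<in> F"
proof -
  have AX: "A \<subseteq> X" "card A = e" using A FQ by (auto simp: Qm_def)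
  have BX: "B \<subseteq> X" "card B = e" using B by (auto simp: Qm_def)
  have fin: "finite A" "finite B" using AX BX X finite_subset by auto
  have neq: "B \<noteq> A" using gt by (simp add: lex_gt_def)
  have card_eq: "card (B - A) = card (A - B)"
    using fin AX BX by (metis Int_commute card_Diff_subset_Int finite_Int)
  have ne: "B - A \<noteq> {}"
  proof
    assume "B - A = {}"
    then have "B \<subseteq> A" by auto
    then have "B = A" using card_subset_eq[OF fin(1)] AX BX by simp
    then show False using neq by simp
  qed
  have "Min ((B - A) \<union> (A - B)) \<in> B" using gt by (simp add: lex_gt_def)
  moreover have "(B - A) \<union> (A - B) \<noteq> {}" using ne by auto
  then have "Min ((B - A) \<union> (A - B)) \<in> (B - A) \<union> (A - B)" using fin by (intro Min_in) auto
  ultimately have "Min ((B - A) \<union> (A - B)) \<in> B - A" by auto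
  then have "valid X (B - A) (A - B)" unfolding valid_def using AX BX card_eq ne by auto
  then have "compressed (B - A) (A - B) F" using all by blast
  then have "sh (B - A) (A - B) A \<in> F" using A by (simp add: compressed_def)
  moreover have "sh (B - A) (A - B) A = B" by (auto simp: sh_def)
  ultimately show ?thesis by simp
qed

lemma initial_lex_seg:
  assumes FQ: "F \<subseteq> Qmons n i e"
    and init: "\<And>A B. A \<in> F \<Longrightarrow> B \<in> Qmons n i e \<Longrightarrow> lex_gt B A \<Longrightarrow> B \<in> F"
  shows "lex_seg n i e (card F) = F"
proof -
  have finQ: "finite (Qmons n i e)"
    by (rule finite_subset[of _ "Pow {1..n}"]) (auto simp: Qmons_def)
  have finF: "finite F" using FQ finQ finite_subset by blast
  have finS: "\<And>S. S \<in> Qmons n i e \<Longrightarrow> finite S"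
    using finite_subset by (auto simp: Qmons_def)
  show ?thesis
  proof
    show "lex_seg n i e (card F) \<subseteq> F"
    proof
      fix S assume S: "S \<in> lex_seg n i e (card F)"
      show "S \<in> F"
      proof (rule ccontr)
        assume SF: "S \<notin> F"
        have "F \<subseteq> {T \<in> Qmons n i e. lex_gt T S}"
        proof
          fix T assume T: "T \<in> F"
          have TQ: "T \<in> Qmons n i e" using T FQ by auto
          have SQ: "S \<in> Qmons n i e" using S by (simp add: lex_seg_def)
          have "T \<noteq> S" using T SF by auto
          then have "lex_gt T S \<or> lex_gt S T" using lex_total finS TQ SQ by blast
          moreover have "\<not> lex_gt S T" using init[OF T SQ] SF by blast
          ultimately show "T \<in> {T \<in> Qmons n i e. lex_gt T S}" using TQ by auto
        qed
        then have "card F \<le> card {T \<in> Qmons n i e. lex_gt T S}"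
          by (rule card_mono[rotated]) (use finQ in auto)
        then show False using S by (simp add: lex_seg_def)
      qed
    qed
  next
    show "F \<subseteq> lex_seg n i e (card F)"
    proof
      fix S assume S: "S \<in> F"
      have "{T \<in> Qmons n i e. lex_gt T S} \<subseteq> F - {S}"
        using init[OF S] by (auto simp: lex_gt_def)
      then have "card {T \<in> Qmons n i e. lex_gt T S} \<le> card (F - {S})"
        by (rule card_mono[rotated]) (use finF in auto)
      also have "\<dots> < card F" using card_Diff1_less[OF finF S] .
      finally show "S \<in> lex_seg n i e (card F)" using S FQ by (auto simp: lex_seg_def)
    qed
  qed
qed

lemma kk:
  assumes FQ: "F \<subseteq> Qmons n i e"
  shows "card (lex_seg n i e (card F)) = card F \<and>
         card (upX ({1..n} - {i}) (lex_seg n i e (card F))) \<le> card (upX ({1..n} - {i}) F)"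
proof -
  let ?X = "{1..n} - {i}"
  have QQ: "Qmons n i e = Qm ?X e" by (simp add: Qmons_def Qm_def)
  have X: "finite ?X" "?X \<subseteq> {..n}" by auto
  have FQ': "F \<subseteq> Qm ?X e" using FQ QQ by simp
  from kk_exists[OF X FQ'] obtain F' where F': "F' \<subseteq> Qm ?X e" "card F' = card F" "card (upX ?X F') \<le> card (upX ?X F)"
    "\<forall>U V. valid ?X U V \<longrightarrow> compressed U V F'" by blast
  have "lex_seg n i e (card F') = F'"
    by (rule initial_lex_seg) (use F' QQ compressed_initial[OF F'(4) F'(1)] in auto)
  then show ?thesis using F' by simp
qed



lemma up_split:
  assumes iX: "i \<notin> X" and A0: "A0 \<subseteq> Pow X" and A1: "A1 \<subseteq> Pow X"
  shows "upX (insert i X) (A0 \<union> insert i ` A1) = upX X A0 \<union> insert i ` (A0 \<union> upX X A1)"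
proof
  show "upX (insert i X) (A0 \<union> insert i ` A1) \<subseteq> upX X A0 \<union> insert i ` (A0 \<union> upX X A1)"
  proof
    fix D assume "D \<in> upX (insert i X) (A0 \<union> insert i ` A1)"
    then obtain j S where jS: "S \<in> A0 \<union> insert i ` A1" "j \<in> insert i X" "j \<notin> S" "D = insert j S"
      by (auto simp: upX_def)
    show "D \<in> upX X A0 \<union> insert i ` (A0 \<union> upX X A1)"
    proof (cases "S \<in> A0")
      case True
      show ?thesis
      proof (cases "j = i")
        case True then show ?thesis using jS \<open>S \<in> A0\<close> by auto
      next
        case False
        then have "D \<in> upX X A0" using jS \<open>S \<in> A0\<close> unfolding upX_def by blast
        then show ?thesis by blast
      qed
    next
      case False
      then obtain T where T: "T \<in> A1" "S = insert i T" using jS by auto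
      have "j \<noteq> i" "j \<in> X" "j \<notin> T" using jS T by auto
      then have "insert j T \<in> upX X A1" using T unfolding upX_def by blast
      moreover have "D = insert i (insert j T)" using jS T by auto
      ultimately show ?thesis by blast
    qed
  qed
next
  show "upX X A0 \<union> insert i ` (A0 \<union> upX X A1) \<subseteq> upX (insert i X) (A0 \<union> insert i ` A1)"
  proof
    fix D assume "D \<in> upX X A0 \<union> insert i ` (A0 \<union> upX X A1)"
    then consider "D \<in> upX X A0" | "D \<in> insert i ` A0" | "D \<in> insert i ` upX X A1" by blast
    then show "D \<in> upX (insert i X) (A0 \<union> insert i ` A1)"
    proof cases
      case 1 then show ?thesis unfolding upX_def by blast
    next
      case 2
      then obtain S where "S \<in> A0" "D = insert i S" by blast
      moreover have "i \<notin> S" using \<open>S \<in> A0\<close> A0 iX by auto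
      ultimately show ?thesis unfolding upX_def by blast
    next
      case 3
      then obtain j T where jT: "T \<in> A1" "j \<in> X" "j \<notin> T" "D = insert i (insert j T)"
        unfolding upX_def by blast
      have "i \<notin> T" "j \<noteq> i" using jT A1 iX by auto
      then have "j \<notin> insert i T" "D = insert j (insert i T)" using jT by auto
      then show ?thesis using jT unfolding upX_def by blast
    qed
  qed
qed

lemma card_split2:
  assumes "finite A0" "finite A1" "\<forall>S\<in>A0. i \<notin> S" "\<forall>S\<in>A1. i \<notin> S"
  shows "card (A0 \<union> insert i ` A1) = card A0 + card A1"
proof -
  have inj: "inj_on (insert i) A1"
  proof (rule inj_onI)
    fix S T assume "S \<in> A1" "T \<in> A1" "insert i S = insert i T"
    then show "S = T" using assms(4) by (metis Diff_insert_absorb)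
  qed
  have "card (A0 \<union> insert i ` A1) = card A0 + card (insert i ` A1)"
    by (rule card_Un_disjoint) (use assms in auto)
  also have "\<dots> = card A0 + card A1" using card_image[OF inj] by simp
  finally show ?thesis .
qed

theorem lemma4p7:
  fixes n d i :: nat and M :: "nat set set"
  assumes i: "i \<in> {1..n}"
    and M: "M \<subseteq> {S. S \<subseteq> {1..n} \<and> card S = d}"
    and gotz: "gotzmann n d (spn (monom ` M) :: (nat set \<Rightarrow> 'k::field) set)"
    and n1: "spn {mulvar j (monom T) | j T. j \<in> {1..n} \<and> j \<noteq> i \<and>
                   T \<in> lex_seg n i (d - 1) (card {S - {i} | S. S \<in> M \<and> i \<in> S})}
             \<subseteq> spn (monom ` lex_seg n i d (card {S \<in> M. i \<notin> S}) :: (nat set \<Rightarrow> 'k) set)"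
  shows "\<forall>S j. monom S \<in> (spn (monom ` M) :: (nat set \<Rightarrow> 'k) set) \<and> i \<in> S \<and>
           j \<in> {1..n} \<and> j \<notin> S \<longrightarrow>
           monom (insert j (S - {i})) \<in> (spn (monom ` M) :: (nat set \<Rightarrow> 'k) set)"
proof -
  let ?X = "{1..n} - {i}"
  define V0 where "V0 = {S \<in> M. i \<notin> S}"
  define V1 where "V1 = {S - {i} | S. S \<in> M \<and> i \<in> S}"
  define L0 where "L0 = lex_seg n i d (card V0)"
  define L1 where "L1 = lex_seg n i (d - 1) (card V1)"
  have finM: "finite M" by (rule finite_subset[of _ "Pow {1..n}"]) (use M in auto)
  have finS: "\<And>S. S \<in> M \<Longrightarrow> finite S"
  proof -
    fix S assume "S \<in> M"
    then have "S \<subseteq> {1..n}" using M by auto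
    then show "finite S" by (rule finite_subset) simp
  qed
  have V0Q: "V0 \<subseteq> Qmons n i d" using M by (auto simp: V0_def Qmons_def)
  have V1Q: "V1 \<subseteq> Qmons n i (d - 1)"
  proof
    fix T assume "T \<in> V1"
    then obtain S where S: "S \<in> M" "i \<in> S" "T = S - {i}" by (auto simp: V1_def)
    have "card T = d - 1" using S finS M by auto
    moreover have "T \<subseteq> ?X" using S M by auto
    ultimately show "T \<in> Qmons n i (d - 1)" by (simp add: Qmons_def)
  qed
  have QP: "\<And>e. Qmons n i e \<subseteq> Pow ?X" by (auto simp: Qmons_def)
  have finQ: "\<And>e. finite (Qmons n i e)" using QP by (meson finite_Diff finite_Pow_iff finite_atLeastAtMost finite_subset)
  have Msplit: "M = V0 \<union> insert i ` V1"
  proof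
    show "M \<subseteq> V0 \<union> insert i ` V1"
    proof
      fix S assume S: "S \<in> M"
      show "S \<in> V0 \<union> insert i ` V1"
      proof (cases "i \<in> S")
        case True
        then have "S - {i} \<in> V1" "S = insert i (S - {i})" using S by (auto simp: V1_def)
        then show ?thesis by blast
      next
        case False then show ?thesis using S by (simp add: V0_def)
      qed
    qed
  next
    show "V0 \<union> insert i ` V1 \<subseteq> M" by (auto simp: V0_def V1_def insert_absorb)
  qed
  from kk[OF V0Q] have cL0: "card L0 = card V0" and uL0: "card (upX ?X L0) \<le> card (upX ?X V0)"
    by (simp_all add: L0_def)
  from kk[OF V1Q] have cL1: "card L1 = card V1" by (simp add: L1_def)
  have L0Q: "L0 \<subseteq> Qmons n i d" by (auto simp: L0_def lex_seg_def)
  have L1Q: "L1 \<subseteq> Qmons n i (d - 1)" by (auto simp: L1_def lex_seg_def)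
  have upL1: "upX ?X L1 \<subseteq> L0"
  proof
    fix D assume "D \<in> upX ?X L1"
    then obtain j T where jT: "T \<in> L1" "j \<in> ?X" "j \<notin> T" "D = insert j T" by (auto simp: upX_def)
    have "mulvar j (monom T) \<in> {mulvar j (monom T) | j T. j \<in> {1..n} \<and> j \<noteq> i \<and>
                   T \<in> lex_seg n i (d - 1) (card {S - {i} | S. S \<in> M \<and> i \<in> S})}"
      using jT by (auto simp: L1_def V1_def)
    then have "(mulvar j (monom T) :: nat set \<Rightarrow> 'k) \<in> spn {mulvar j (monom T) | j T. j \<in> {1..n} \<and> j \<noteq> i \<and>
                   T \<in> lex_seg n i (d - 1) (card {S - {i} | S. S \<in> M \<and> i \<in> S})}"
      unfolding spn_def by (rule VS.span_base)
    then have "(mulvar j (monom T) :: nat set \<Rightarrow> 'k) \<in> spn (monom ` L0)"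
      using n1 by (auto simp: L0_def V0_def)
    then have "(monom D :: nat set \<Rightarrow> 'k) \<in> spn (monom ` L0)" using jT by (simp add: mulvar_monom)
    then show "D \<in> L0" by (simp add: monom_in_spn)
  qed
  define NL where "NL = L0 \<union> insert i ` L1"
  have NLsub: "NL \<subseteq> {S. S \<subseteq> {1..n} \<and> card S = d}"
  proof
    fix S assume "S \<in> NL"
    then consider "S \<in> L0" | T where "T \<in> L1" "S = insert i T" by (auto simp: NL_def)
    then show "S \<in> {S. S \<subseteq> {1..n} \<and> card S = d}"
    proof cases
      case 1 then show ?thesis using L0Q by (auto simp: Qmons_def)
    next
      case 2
      have T: "T \<subseteq> ?X" "card T = d - 1" using 2 L1Q by (auto simp: Qmons_def)
      have finT: "finite T" using T(1) finite_subset by blast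
      have "L1 \<noteq> {}" using 2 by auto
      then have "card V1 \<noteq> 0" using cL1 L1Q finQ by (metis card_0_eq finite_subset)
      then have "V1 \<noteq> {}" by (metis card.empty)
      then obtain S' where "S' \<in> M" "i \<in> S'" unfolding V1_def by blast
      then have "d \<ge> 1" using M finS by (metis (mono_tags, lifting) One_nat_def Suc_leI card_gt_0_iff empty_iff mem_Collect_eq subsetD)
      moreover have "i \<notin> T" using T(1) by auto
      ultimately have "card S = d" using 2 T finT by (simp add: card_insert_if)
      moreover have "S \<subseteq> {1..n}" using 2 T i by auto
      ultimately show ?thesis by simp
    qed
  qed
  have finV0: "finite V0" "finite V1" "finite L0" "finite L1"
    using V0Q V1Q L0Q L1Q finQ finite_subset by blast+
  have noi: "\<forall>S\<in>V0. i \<notin> S" "\<forall>S\<in>V1. i \<notin> S" "\<forall>S\<in>L0. i \<notin> S" "\<forall>S\<in>L1. i \<notin> S"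
    using V0Q V1Q L0Q L1Q by (auto simp: Qmons_def)
  have cardNL: "card NL = card M"
    unfolding NL_def using card_split2[OF finV0(3,4) noi(3,4)] card_split2[OF finV0(1,2) noi(1,2)] Msplit cL0 cL1
    by simp
  have gc: "card (upX {1..n} M) \<le> card (upX {1..n} NL)"
    by (rule gotz_card[OF gotz M NLsub cardNL])
  have iX: "i \<notin> ?X" and Xeq: "{1..n} = insert i ?X" using i by auto
  have PV: "V0 \<subseteq> Pow ?X" "V1 \<subseteq> Pow ?X" "L0 \<subseteq> Pow ?X" "L1 \<subseteq> Pow ?X" using V0Q V1Q L0Q L1Q QP by blast+
  have finX: "finite ?X" by auto
  have finUp: "\<And>A. A \<subseteq> Pow ?X \<Longrightarrow> finite (upX ?X A)" using finite_upX[OF finX] by blast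
  have noiUp: "\<And>A. A \<subseteq> Pow ?X \<Longrightarrow> \<forall>S\<in>upX ?X A. i \<notin> S" by (auto simp: upX_def)
  have c1: "card (upX {1..n} M) = card (upX ?X V0) + card (V0 \<union> upX ?X V1)"
  proof -
    have "upX {1..n} M = upX ?X V0 \<union> insert i ` (V0 \<union> upX ?X V1)"
      using up_split[OF iX PV(1,2)] Msplit Xeq by simp
    moreover have "card (upX ?X V0 \<union> insert i ` (V0 \<union> upX ?X V1)) = card (upX ?X V0) + card (V0 \<union> upX ?X V1)"
      by (rule card_split2) (use finUp PV noiUp noi finV0 in auto)
    ultimately show ?thesis by simp
  qed
  have c2: "card (upX {1..n} NL) = card (upX ?X L0) + card L0"
  proof -
    have "upX {1..n} NL = upX ?X L0 \<union> insert i ` (L0 \<union> upX ?X L1)"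
      using up_split[OF iX PV(3,4)] NL_def Xeq by simp
    also have "L0 \<union> upX ?X L1 = L0" using upL1 by blast
    finally have "upX {1..n} NL = upX ?X L0 \<union> insert i ` L0" .
    moreover have "card (upX ?X L0 \<union> insert i ` L0) = card (upX ?X L0) + card L0"
      by (rule card_split2) (use finUp PV noiUp noi finV0 in auto)
    ultimately show ?thesis by simp
  qed
  have "card (V0 \<union> upX ?X V1) \<le> card V0" using gc c1 c2 uL0 cL0 by linarith
  moreover have "finite (V0 \<union> upX ?X V1)" using finV0 finUp PV by blast
  ultimately have "V0 = V0 \<union> upX ?X V1" using card_seteq[of "V0 \<union> upX ?X V1" V0] by blast
  then have upV1: "upX ?X V1 \<subseteq> V0" by blast
  show ?thesis
  proof (intro allI impI)
    fix S j assume h: "monom S \<in> (spn (monom ` M) :: (nat set \<Rightarrow> 'k) set) \<and> i \<in> S \<and> j \<in> {1..n} \<and> j \<notin> S"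
    then have SM: "S \<in> M" by (simp add: monom_in_spn)
    have "S - {i} \<in> V1" using SM h by (auto simp: V1_def)
    moreover have "j \<in> ?X" "j \<notin> S - {i}" using h by auto
    ultimately have "insert j (S - {i}) \<in> upX ?X V1" unfolding upX_def by blast
    then have "insert j (S - {i}) \<in> M" using upV1 by (auto simp: V0_def)
    then show "monom (insert j (S - {i})) \<in> (spn (monom ` M) :: (nat set \<Rightarrow> 'k) set)"
      by (simp add: monom_in_spn)
  qed
qed

end
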